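(* Let $(R,\mathfrak{m})$ be an almost setup. For every $t\in\mathbb{N}$ let $$C_t\colon\ 0\to M_{t,1}\xrightarrow{\varphi_t}M_{t,2}\xrightarrow{\psi_t}M_{t,3}$$ be a complex of $R$-modules, and for $t\ge1$ and $i=1,2,3$ let $\omega_t\colon M_{t,i}\to M_{t-1,i}$ be $R$-linear maps such that all resulting squares commute. If every $C_t$ is almost exact, then the inverse limit complex $\varprojlim_{t\in\mathbb{N}}C_t$ is almost exact as well.
   Context: An almost setup is a pair $(R,\mathfrak{m})$ of a commutative ring $R$ and an ideal $\mathfrak{m}$ with $\mathfrak{m}^2=\mathfrak{m}$ and $\mathfrak{m}\otimes_R\mathfrak{m}$ flat over $R$. An $R$-module $N$ is almost zero if $\mathfrak{m}N=0$. A complex of $R$-modules is almost exact if its cohomology modules are almost zero (equivalently, it becomes exact in the quotient category of almost $R$-modules). *)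

theory Defs
  imports Complex_Main "HOL-Library.Function_Algebras"
begin

(* The ring R is the type 'a :: comm_ring_1 (R = UNIV).  R-modules are
   R-submodules M \<subseteq> 'b of an ambient R-module ('b, scale) *)

definition is_ideal :: "'a::comm_ring_1 set \<Rightarrow> bool" where
  "is_ideal I \<longleftrightarrow> module.subspace ((*) :: 'a \<Rightarrow> 'a \<Rightarrow> 'a) I"

definition ideal_prod :: "'a::comm_ring_1 set \<Rightarrow> 'a set \<Rightarrow> 'a set" where
  "ideal_prod I J = module.span ((*) :: 'a \<Rightarrow> 'a \<Rightarrow> 'a) {x * y | x y. x \<in> I \<and> y \<in> J}"

definition fscale :: "'a::comm_ring_1 \<Rightarrow> ('a \<times> 'a \<Rightarrow> 'a) \<Rightarrow> ('a \<times> 'a \<Rightarrow> 'a)" where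
  "fscale r f = (\<lambda>p. r * f p)"

definition delta :: "'a \<times> 'a \<Rightarrow> ('a \<times> 'a \<Rightarrow> 'a::comm_ring_1)" where
  "delta p = (\<lambda>q. if q = p then 1 else 0)"

definition free_pairs :: "'a::comm_ring_1 set \<Rightarrow> ('a \<times> 'a \<Rightarrow> 'a) set" where
  "free_pairs I = {f. finite {p. f p \<noteq> 0} \<and> {p. f p \<noteq> 0} \<subseteq> I \<times> I}"

definition bilin_rels :: "'a::comm_ring_1 set \<Rightarrow> ('a \<times> 'a \<Rightarrow> 'a) set" where
  "bilin_rels I =
     {delta (x + x', y) - delta (x, y) - delta (x', y) | x x' y. x \<in> I \<and> x' \<in> I \<and> y \<in> I}
   \<union> {delta (x, y + y') - delta (x, y) - delta (x, y') | x y y'. x \<in> I \<and> y \<in> I \<and> y' \<in> I}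
   \<union> {delta (r * x, y) - fscale r (delta (x, y)) | r x y. x \<in> I \<and> y \<in> I}
   \<union> {delta (x, r * y) - fscale r (delta (x, y)) | r x y. x \<in> I \<and> y \<in> I}"

(* the submodule of relations; I \<otimes>_R I = free_pairs I / tensor_rels I *)
definition tensor_rels :: "'a::comm_ring_1 set \<Rightarrow> ('a \<times> 'a \<Rightarrow> 'a) set" where
  "tensor_rels I = module.span fscale (bilin_rels I)"

(* flatness of I \<otimes>_R I, via the equational criterion of flatness:
   every relation \<Sum> a_i x_i = 0 in the module is trivial, i.e. there are
   y_j and b_ij with x_i = \<Sum>_j b_ij y_j and \<Sum>_i a_i b_ij = 0 for all j.
   Elements of the quotient are represented by elements of free_pairs I,
   equality in the quotient is congruence modulo tensor_rels I. *)
definition tensor_square_flat :: "'a::comm_ring_1 set \<Rightarrow> bool" where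
  "tensor_square_flat I \<longleftrightarrow>
     (\<forall>n (a :: nat \<Rightarrow> 'a) x.
        (\<forall>i<n. x i \<in> free_pairs I) \<longrightarrow>
        (\<Sum>i<n. fscale (a i) (x i)) \<in> tensor_rels I \<longrightarrow>
        (\<exists>k (b :: nat \<Rightarrow> nat \<Rightarrow> 'a) y.
            (\<forall>j<k. y j \<in> free_pairs I) \<and>
            (\<forall>i<n. x i - (\<Sum>j<k. fscale (b i j) (y j)) \<in> tensor_rels I) \<and>
            (\<forall>j<k. (\<Sum>i<n. a i * b i j) = 0)))"

definition almost_setup :: "'a::comm_ring_1 set \<Rightarrow> bool" where
  "almost_setup m \<longleftrightarrow> is_ideal m \<and> ideal_prod m m = m \<and> tensor_square_flat m"

definition lin_on ::
  "('a::comm_ring_1 \<Rightarrow> 'b::ab_group_add \<Rightarrow> 'b) \<Rightarrow> ('a \<Rightarrow> 'c::ab_group_add \<Rightarrow> 'c)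
   \<Rightarrow> 'b set \<Rightarrow> 'c set \<Rightarrow> ('b \<Rightarrow> 'c) \<Rightarrow> bool" where
  "lin_on s1 s2 A B f \<longleftrightarrow>
     (\<forall>x\<in>A. f x \<in> B) \<and> (\<forall>x\<in>A. \<forall>y\<in>A. f (x + y) = f x + f y) \<and>
     (\<forall>r. \<forall>x\<in>A. f (s1 r x) = s2 r (f x))"

definition complex3 ::
  "('a::comm_ring_1 \<Rightarrow> 'b::ab_group_add \<Rightarrow> 'b) \<Rightarrow> ('a \<Rightarrow> 'c::ab_group_add \<Rightarrow> 'c)
   \<Rightarrow> ('a \<Rightarrow> 'd::ab_group_add \<Rightarrow> 'd) \<Rightarrow> 'b set \<Rightarrow> 'c set \<Rightarrow> 'd set
   \<Rightarrow> ('b \<Rightarrow> 'c) \<Rightarrow> ('c \<Rightarrow> 'd) \<Rightarrow> bool" where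
  "complex3 s1 s2 s3 A B C f g \<longleftrightarrow>
     module s1 \<and> module s2 \<and> module s3 \<and>
     module.subspace s1 A \<and> module.subspace s2 B \<and> module.subspace s3 C \<and>
     lin_on s1 s2 A B f \<and> lin_on s2 s3 B C g \<and> (\<forall>x\<in>A. g (f x) = 0)"

(* 0 \<rightarrow> A \<rightarrow> B \<rightarrow> C is almost exact: the cohomology modules
   H^0 = ker f and H^1 = ker g / im f are killed by m *)
definition almost_exact3 ::
  "'a::comm_ring_1 set \<Rightarrow> ('a \<Rightarrow> 'b::ab_group_add \<Rightarrow> 'b) \<Rightarrow> ('a \<Rightarrow> 'c::ab_group_add \<Rightarrow> 'c)
   \<Rightarrow> 'b set \<Rightarrow> 'c set \<Rightarrow> ('b \<Rightarrow> 'c) \<Rightarrow> ('c \<Rightarrow> 'd::ab_group_add) \<Rightarrow> bool" where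
  "almost_exact3 m s1 s2 A B f g \<longleftrightarrow>
     (\<forall>x\<in>A. f x = 0 \<longrightarrow> (\<forall>r\<in>m. s1 r x = 0)) \<and>
     (\<forall>y\<in>B. g y = 0 \<longrightarrow> (\<forall>r\<in>m. \<exists>x\<in>A. f x = s2 r y))"

definition inv_lim :: "(nat \<Rightarrow> 'b set) \<Rightarrow> (nat \<Rightarrow> 'b \<Rightarrow> 'b) \<Rightarrow> (nat \<Rightarrow> 'b) set" where
  "inv_lim M \<omega> = {x. (\<forall>t. x t \<in> M t) \<and> (\<forall>t. \<omega> (Suc t) (x (Suc t)) = x t)}"

definition lim_scale :: "('a \<Rightarrow> 'b \<Rightarrow> 'b) \<Rightarrow> 'a \<Rightarrow> (nat \<Rightarrow> 'b) \<Rightarrow> (nat \<Rightarrow> 'b)" where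
  "lim_scale s r x = (\<lambda>t. s r (x t))"

definition lim_map :: "(nat \<Rightarrow> 'b \<Rightarrow> 'c) \<Rightarrow> (nat \<Rightarrow> 'b) \<Rightarrow> (nat \<Rightarrow> 'c)" where
  "lim_map f x = (\<lambda>t. f t (x t))"

end

theory Submission
  imports Defs
begin

theorem lemmaB4:
  fixes m :: "'a::comm_ring_1 set"
    and s1 :: "'a \<Rightarrow> 'b::ab_group_add \<Rightarrow> 'b"
    and s2 :: "'a \<Rightarrow> 'c::ab_group_add \<Rightarrow> 'c"
    and s3 :: "'a \<Rightarrow> 'd::ab_group_add \<Rightarrow> 'd"
    and M1 :: "nat \<Rightarrow> 'b set" and M2 :: "nat \<Rightarrow> 'c set" and M3 :: "nat \<Rightarrow> 'd set"
    and \<phi> :: "nat \<Rightarrow> 'b \<Rightarrow> 'c" and \<psi> :: "nat \<Rightarrow> 'c \<Rightarrow> 'd"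
    and \<omega>1 :: "nat \<Rightarrow> 'b \<Rightarrow> 'b" and \<omega>2 :: "nat \<Rightarrow> 'c \<Rightarrow> 'c" and \<omega>3 :: "nat \<Rightarrow> 'd \<Rightarrow> 'd"
  assumes almost: "almost_setup m"
    and cx: "\<And>t. complex3 s1 s2 s3 (M1 t) (M2 t) (M3 t) (\<phi> t) (\<psi> t)"
    and lin1: "\<And>t. lin_on s1 s1 (M1 (Suc t)) (M1 t) (\<omega>1 (Suc t))"
    and lin2: "\<And>t. lin_on s2 s2 (M2 (Suc t)) (M2 t) (\<omega>2 (Suc t))"
    and lin3: "\<And>t. lin_on s3 s3 (M3 (Suc t)) (M3 t) (\<omega>3 (Suc t))"
    and comm1: "\<And>t x. x \<in> M1 (Suc t) \<Longrightarrow> \<phi> t (\<omega>1 (Suc t) x) = \<omega>2 (Suc t) (\<phi> (Suc t) x)"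
    and comm2: "\<And>t y. y \<in> M2 (Suc t) \<Longrightarrow> \<psi> t (\<omega>2 (Suc t) y) = \<omega>3 (Suc t) (\<psi> (Suc t) y)"
    and ae: "\<And>t. almost_exact3 m s1 s2 (M1 t) (M2 t) (\<phi> t) (\<psi> t)"
  shows "almost_exact3 m (lim_scale s1) (lim_scale s2)
           (inv_lim M1 \<omega>1) (inv_lim M2 \<omega>2) (lim_map \<phi>) (lim_map \<psi>)"
proof -
  have M1: "module s1" "\<And>t. module.subspace s1 (M1 t)" and M2: "module s2" "\<And>t. module.subspace s2 (M2 t)"
    and phl: "\<And>t. lin_on s1 s2 (M1 t) (M2 t) (\<phi> t)"
    and psl: "\<And>t. lin_on s2 s3 (M2 t) (M3 t) (\<psi> t)"
    using cx unfolding complex3_def by blast+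
  have phadd: "\<And>t a b. a \<in> M1 t \<Longrightarrow> b \<in> M1 t \<Longrightarrow> \<phi> t (a + b) = \<phi> t a + \<phi> t b"
    and phsc: "\<And>t r a. a \<in> M1 t \<Longrightarrow> \<phi> t (s1 r a) = s2 r (\<phi> t a)"
    and phin: "\<And>t a. a \<in> M1 t \<Longrightarrow> \<phi> t a \<in> M2 t"
    using phl unfolding lin_on_def by blast+
  have phdiff: "\<phi> t (a - b) = \<phi> t a - \<phi> t b" if "a \<in> M1 t" "b \<in> M1 t" for t a b
  proof -
    have "a - b \<in> M1 t" using module.subspace_diff[OF M1(1) M1(2) that] .
    then have "\<phi> t (b + (a - b)) = \<phi> t b + \<phi> t (a - b)" using phadd that by blast
    then show ?thesis by (simp add: algebra_simps)
  qed
  have w1add: "\<And>t a b. a \<in> M1 (Suc t) \<Longrightarrow> b \<in> M1 (Suc t) \<Longrightarrow> \<omega>1 (Suc t) (a + b) = \<omega>1 (Suc t) a + \<omega>1 (Suc t) b"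
    and w1sc: "\<And>t r a. a \<in> M1 (Suc t) \<Longrightarrow> \<omega>1 (Suc t) (s1 r a) = s1 r (\<omega>1 (Suc t) a)"
    and w1in: "\<And>t a. a \<in> M1 (Suc t) \<Longrightarrow> \<omega>1 (Suc t) a \<in> M1 t"
    using lin1 unfolding lin_on_def by blast+
  have w2sc: "\<And>t r a. a \<in> M2 (Suc t) \<Longrightarrow> \<omega>2 (Suc t) (s2 r a) = s2 r (\<omega>2 (Suc t) a)"
    using lin2 unfolding lin_on_def by blast+
  have ae1: "\<And>t x r. x \<in> M1 t \<Longrightarrow> \<phi> t x = 0 \<Longrightarrow> r \<in> m \<Longrightarrow> s1 r x = 0"
    and ae2: "\<And>t y r. y \<in> M2 t \<Longrightarrow> \<psi> t y = 0 \<Longrightarrow> r \<in> m \<Longrightarrow> \<exists>x\<in>M1 t. \<phi> t x = s2 r y"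
    using ae unfolding almost_exact3_def by blast+
  have uniq: "s1 q a = s1 q b" if "a \<in> M1 t" "b \<in> M1 t" "\<phi> t a = \<phi> t b" "q \<in> m" for t a b q
  proof -
    have "a - b \<in> M1 t" using module.subspace_diff[OF M1(1) M1(2) that(1,2)] .
    moreover have "\<phi> t (a - b) = 0" using phdiff that by simp
    ultimately have "s1 q (a - b) = 0" using ae1 that by blast
    then show ?thesis using module.scale_right_diff_distrib[OF M1(1)] by simp
  qed
  show ?thesis unfolding almost_exact3_def
  proof (intro conjI ballI impI)
    fix x r assume x: "x \<in> inv_lim M1 \<omega>1" "lim_map \<phi> x = 0" "r \<in> m"
    show "lim_scale s1 r x = 0"
    proof
      fix t
      have "\<phi> t (x t) = 0" using x(2) unfolding lim_map_def by (metis zero_fun_def)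
      then show "lim_scale s1 r x t = 0 t" using x ae1 unfolding inv_lim_def lim_scale_def by auto
    qed
  next
    fix y assume y: "y \<in> inv_lim M2 \<omega>2" "lim_map \<psi> y = 0"
    have yt: "\<And>t. y t \<in> M2 t" "\<And>t. \<omega>2 (Suc t) (y (Suc t)) = y t"
      using y(1) unfolding inv_lim_def by auto
    have psy: "\<psi> t (y t) = 0" for t using y(2) unfolding lim_map_def by (metis zero_fun_def)
    define P where "P r \<longleftrightarrow> (\<exists>x\<in>inv_lim M1 \<omega>1. lim_map \<phi> x = lim_scale s2 r y)" for r
    have prod: "P (p * q)" if "p \<in> m" "q \<in> m" for p q
    proof -
      define X where "X t = (SOME x. x \<in> M1 t \<and> \<phi> t x = s2 p (y t))" for t
      have X: "X t \<in> M1 t \<and> \<phi> t (X t) = s2 p (y t)" for t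
        unfolding X_def by (rule someI_ex) (use ae2[OF yt(1) psy that(1)] in blast)
      define z where "z t = s1 q (X t)" for t
      have "z \<in> inv_lim M1 \<omega>1"
        unfolding inv_lim_def
      proof (intro CollectI conjI allI)
        fix t
        show "z t \<in> M1 t" unfolding z_def using module.subspace_scale[OF M1(1) M1(2)] X by blast
        have a: "\<omega>1 (Suc t) (X (Suc t)) \<in> M1 t" using w1in X by blast
        have "\<phi> t (\<omega>1 (Suc t) (X (Suc t))) = \<omega>2 (Suc t) (\<phi> (Suc t) (X (Suc t)))"
          using comm1[of "X (Suc t)" t] X[of "Suc t"] by blast
        also have "\<dots> = \<omega>2 (Suc t) (s2 p (y (Suc t)))" using X[of "Suc t"] by simp
        also have "\<dots> = s2 p (\<omega>2 (Suc t) (y (Suc t)))" using w2sc[OF yt(1)[of "Suc t"]] by blast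
        also have "\<dots> = s2 p (y t)" using yt(2)[of t] by simp
        also have "\<dots> = \<phi> t (X t)" using X[of t] by simp
        finally have "s1 q (\<omega>1 (Suc t) (X (Suc t))) = s1 q (X t)"
          using uniq[OF a _ _ that(2)] X[of t] by blast
        then show "\<omega>1 (Suc t) (z (Suc t)) = z t" unfolding z_def using w1sc[of "X (Suc t)" t q] X[of "Suc t"] by simp
      qed
      moreover have "lim_map \<phi> z = lim_scale s2 (p * q) y"
        unfolding lim_map_def lim_scale_def z_def
        using X phsc module.scale_scale[OF M2(1)] by (simp add: mult.commute)
      ultimately show ?thesis unfolding P_def by blast
    qed
    have P0: "P 0"
    proof -
      have "(\<lambda>t. 0) \<in> inv_lim M1 \<omega>1" unfolding inv_lim_def
      proof (intro CollectI conjI allI)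
        fix t show "0 \<in> M1 t" using module.subspace_0[OF M1(1) M1(2)] .
        have z: "(0::'b) \<in> M1 (Suc t)" using module.subspace_0[OF M1(1) M1(2)] .
        have "\<omega>1 (Suc t) (0 + 0) = \<omega>1 (Suc t) 0 + \<omega>1 (Suc t) 0" using w1add[OF z z] .
        then show "\<omega>1 (Suc t) 0 = 0" by simp
      qed
      moreover have "lim_map \<phi> (\<lambda>t. 0) = lim_scale s2 0 y"
      proof
        fix t
        have z: "(0::'b) \<in> M1 t" using module.subspace_0[OF M1(1) M1(2)] .
        have "\<phi> t (0 + 0) = \<phi> t 0 + \<phi> t 0" using phadd[OF z z] .
        then show "lim_map \<phi> (\<lambda>t. 0) t = lim_scale s2 0 y t"
          unfolding lim_map_def lim_scale_def using module.scale_zero_left[OF M2(1)] by simp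
      qed
      ultimately show ?thesis unfolding P_def by blast
    qed
    have Pstep: "P (c * a + b)" if Pa: "P a" and Pb: "P b" for a b c
    proof -
      obtain u where u: "u \<in> inv_lim M1 \<omega>1" "lim_map \<phi> u = lim_scale s2 a y" using Pa unfolding P_def by blast
      obtain v where v: "v \<in> inv_lim M1 \<omega>1" "lim_map \<phi> v = lim_scale s2 b y" using Pb unfolding P_def by blast
      have ut: "\<And>t. u t \<in> M1 t" "\<And>t. \<omega>1 (Suc t) (u (Suc t)) = u t"
        and vt: "\<And>t. v t \<in> M1 t" "\<And>t. \<omega>1 (Suc t) (v (Suc t)) = v t"
        using u(1) v(1) unfolding inv_lim_def by auto
      have pu: "\<phi> t (u t) = s2 a (y t)" for t
        using fun_cong[OF u(2), of t] unfolding lim_map_def lim_scale_def by simp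
      have pv: "\<phi> t (v t) = s2 b (y t)" for t
        using fun_cong[OF v(2), of t] unfolding lim_map_def lim_scale_def by simp
      define w where "w t = s1 c (u t) + v t" for t
      have wt: "w t \<in> M1 t" for t unfolding w_def
        using module.subspace_scale[OF M1(1) M1(2)] module.subspace_add[OF M1(1) M1(2)] ut vt by blast
      have "w \<in> inv_lim M1 \<omega>1" unfolding inv_lim_def
      proof (intro CollectI conjI allI)
        fix t show "w t \<in> M1 t" by (rule wt)
        have "s1 c (u (Suc t)) \<in> M1 (Suc t)" using module.subspace_scale[OF M1(1) M1(2)] ut by blast
        then show "\<omega>1 (Suc t) (w (Suc t)) = w t" unfolding w_def
          using w1add[of "s1 c (u (Suc t))" t "v (Suc t)"] w1sc[of "u (Suc t)" t c] ut vt by simp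
      qed
      moreover have "lim_map \<phi> w = lim_scale s2 (c * a + b) y"
      proof
        fix t
        have "s1 c (u t) \<in> M1 t" using module.subspace_scale[OF M1(1) M1(2)] ut by blast
        then have "\<phi> t (w t) = s2 c (s2 a (y t)) + s2 b (y t)" unfolding w_def
          using phadd[of "s1 c (u t)" t "v t"] phsc[of "u t" t c] ut vt pu pv by simp
        also have "\<dots> = s2 (c * a + b) (y t)"
          using module.scale_scale[OF M2(1)] module.scale_left_distrib[OF M2(1)] by simp
        finally show "lim_map \<phi> w t = lim_scale s2 (c * a + b) y t"
          unfolding lim_map_def lim_scale_def .
      qed
      ultimately show ?thesis unfolding P_def by blast
    qed
    have mod: "module ((*) :: 'a \<Rightarrow> 'a \<Rightarrow> 'a)" by unfold_locales (simp_all add: algebra_simps)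
    fix r assume r: "r \<in> m"
    then have "r \<in> ideal_prod m m" using almost unfolding almost_setup_def by simp
    then have "r \<in> module.span ((*) :: 'a \<Rightarrow> 'a \<Rightarrow> 'a) {x * y | x y. x \<in> m \<and> y \<in> m}"
      unfolding ideal_prod_def .
    then have "P r"
    proof (rule module.span_induct_alt[OF mod, where h=P])
      show "P 0" by (rule P0)
    next
      fix c w z assume "w \<in> {x * y | x y. x \<in> m \<and> y \<in> m}" "P z"
      then show "P (c * w + z)" using prod Pstep by blast
    qed
    then show "\<exists>x\<in>inv_lim M1 \<omega>1. lim_map \<phi> x = lim_scale s2 r y" unfolding P_def .
  qed
qed

end
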